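(* Let $N\ge 1$ be an integer and let $P=p_1p_2\cdots p_k$ be a product of $k\ge1$ primes. For $1\le n\le N$ let $\widetilde w_n\in\{0,1,\dots,P-1\}$ be the remainder of $w_n$ upon division by $P$. If $N\,\widetilde w_n<P$ for each $1\le n\le N$, then $\widetilde w_n=w_n$ for each $1\le n\le N$.
   Context: The stack-sorting map $s$ is defined recursively: $s$ sends the empty permutation to itself, and if $\pi$ is nonempty with largest entry $m$, written $\pi=LmR$, then $s(\pi)=s(L)\,s(R)\,m$. A permutation $\pi$ is $3$-stack-sortable if $s(s(s(\pi)))$ is increasing. $w_n$ denotes the number of $3$-stack-sortable permutations of $\{1,\dots,n\}$. *)

theory Defs
  imports Main "HOL-Computational_Algebra.Primes" "HOL-Combinatorics.Multiset_Permutations"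
begin

function stack_sort :: "nat list \<Rightarrow> nat list" where
  "stack_sort [] = []"
| "stack_sort (x # xs) =
     (let m = Max (set (x # xs));
          L = takeWhile (\<lambda>y. y \<noteq> m) (x # xs);
          R = tl (dropWhile (\<lambda>y. y \<noteq> m) (x # xs))
      in stack_sort L @ stack_sort R @ [m])"
  by pat_completeness auto
termination
proof (relation "measure length")
  fix x :: nat and xs m L
  assume m: "m = Max (set (x # xs))" and L: "L = takeWhile (\<lambda>y. y \<noteq> m) (x # xs)"
  have mi: "m \<in> set (x # xs)" unfolding m by (rule Max_in) auto
  have ne: "L \<noteq> x # xs"
    using mi unfolding L by (metis (mono_tags, lifting) takeWhile_eq_all_conv)
  have "length L \<noteq> length (x # xs)"
  proof
    assume "length L = length (x # xs)"
    then have "L = take (length L) (x # xs)" unfolding L by (metis takeWhile_eq_take)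
    then show False using ne \<open>length L = length (x # xs)\<close> by simp
  qed
  moreover have "length L \<le> length (x # xs)" unfolding L by (rule length_takeWhile_le)
  ultimately show "(L, x # xs) \<in> measure length" by simp
next
  fix x :: nat and xs m L R
  assume "R = tl (dropWhile (\<lambda>y. y \<noteq> m) (x # xs))"
  then show "(R, x # xs) \<in> measure length"
  proof -
    have "length (dropWhile (\<lambda>y. y \<noteq> m) (x # xs)) \<le> length (x # xs)"
      by (rule length_dropWhile_le)
    then have "length R < length (x # xs)"
      unfolding \<open>R = _\<close> by (simp del: dropWhile.simps)
    then show ?thesis by simp
  qed
qed auto

definition three_stack_sortable :: "nat list \<Rightarrow> bool" where
  "three_stack_sortable \<pi> \<longleftrightarrow> sorted_wrt (<) (stack_sort (stack_sort (stack_sort \<pi>)))"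

definition w :: "nat \<Rightarrow> nat" where
  "w n = card {\<pi> \<in> permutations_of_set {1..n}. three_stack_sortable \<pi>}"

end

theory Submission
  imports Defs
begin

lemma stack_sort_ne:
  assumes "xs \<noteq> []"
  shows "stack_sort xs = (let m = Max (set xs);
          L = takeWhile (\<lambda>y. y \<noteq> m) xs;
          R = tl (dropWhile (\<lambda>y. y \<noteq> m) xs)
      in stack_sort L @ stack_sort R @ [m])"
  using assms by (cases xs) (simp_all del: stack_sort.simps, simp)

declare stack_sort.simps(2)[simp del]

lemma takeWhile_filter_comm:
  assumes "\<forall>x. \<not> Q x \<longrightarrow> P x"
  shows "takeWhile P (filter Q xs) = filter Q (takeWhile P xs)"
  using assms by (induction xs) auto

lemma dropWhile_filter_comm:
  assumes "\<forall>x. \<not> Q x \<longrightarrow> P x"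
  shows "dropWhile P (filter Q xs) = filter Q (dropWhile P xs)"
  using assms by (induction xs) auto

lemma set_stack_sort: "set (stack_sort xs) = set xs"
proof (induction xs rule: stack_sort.induct)
  case 1
  then show ?case by simp
next
  case (2 x xs)
  define m where "m = Max (set (x # xs))"
  define L where "L = takeWhile (\<lambda>y. y \<noteq> m) (x # xs)"
  define R where "R = tl (dropWhile (\<lambda>y. y \<noteq> m) (x # xs))"
  have mi: "m \<in> set (x # xs)" unfolding m_def by (rule Max_in) auto
  have dw: "dropWhile (\<lambda>y. y \<noteq> m) (x # xs) = m # R"
    unfolding R_def using mi
    by (metis (mono_tags, lifting) dropWhile_eq_Nil_conv hd_dropWhile list.collapse)
  have "x # xs = L @ m # R" unfolding L_def using dw by (metis takeWhile_dropWhile_id)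
  then have "set (x # xs) = set L \<union> set R \<union> {m}" by auto
  moreover have "stack_sort (x # xs) = stack_sort L @ stack_sort R @ [m]"
    by (simp only: stack_sort.simps(2) m_def L_def R_def Let_def)
  ultimately show ?case using 2 m_def L_def R_def by auto
qed

lemma stack_sort_filter_min:
  assumes "\<forall>y\<in>set xs. a \<le> y"
  shows "filter (\<lambda>y. y \<noteq> a) (stack_sort xs) = stack_sort (filter (\<lambda>y. y \<noteq> (a::nat)) xs)"
  using assms
proof (induction xs rule: stack_sort.induct)
  case 1
  then show ?case by simp
next
  case (2 x xs)
  define m where "m = Max (set (x # xs))"
  define L where "L = takeWhile (\<lambda>y. y \<noteq> m) (x # xs)"
  define R where "R = tl (dropWhile (\<lambda>y. y \<noteq> m) (x # xs))"
  have mi: "m \<in> set (x # xs)" unfolding m_def by (rule Max_in) auto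
  have mmax: "\<forall>y\<in>set (x#xs). y \<le> m" unfolding m_def by auto
  have dw: "dropWhile (\<lambda>y. y \<noteq> m) (x # xs) = m # R"
    unfolding R_def using mi
    by (metis (mono_tags, lifting) dropWhile_eq_Nil_conv hd_dropWhile list.collapse)
  have split: "x # xs = L @ m # R" unfolding L_def using dw by (metis takeWhile_dropWhile_id)
  have ss: "stack_sort (x # xs) = stack_sort L @ stack_sort R @ [m]"
    by (simp only: stack_sort.simps(2) m_def L_def R_def Let_def)
  have sub: "set L \<subseteq> set (x # xs)" "set R \<subseteq> set (x # xs)"
  proof -
    have "set (x#xs) = set L \<union> {m} \<union> set R" by (subst split) simp
    then show "set L \<subseteq> set (x # xs)" "set R \<subseteq> set (x # xs)" by blast+
  qed
  have hL: "\<forall>y\<in>set L. a \<le> y" and hR: "\<forall>y\<in>set R. a \<le> y"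
    using "2.prems" sub by blast+
  have IHL: "filter (\<lambda>y. y \<noteq> a) (stack_sort L) = stack_sort (filter (\<lambda>y. y \<noteq> a) L)"
    using "2.IH"(1)[OF m_def L_def R_def hL] .
  have IHR: "filter (\<lambda>y. y \<noteq> a) (stack_sort R) = stack_sort (filter (\<lambda>y. y \<noteq> a) R)"
    using "2.IH"(2)[OF m_def L_def R_def hR] .
  show ?case
  proof (cases "a = m")
    case True
    then have all: "\<forall>y\<in>set (x#xs). y = a" using mmax "2.prems" by fastforce
    then have "filter (\<lambda>y. y \<noteq> a) (x # xs) = []" by (simp add: filter_empty_conv)
    moreover have "filter (\<lambda>y. y \<noteq> a) (stack_sort (x # xs)) = []"
      using all set_stack_sort[of "x # xs"] by (simp add: filter_empty_conv)
    ultimately show ?thesis by simp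
  next
    case False
    define ys where "ys = filter (\<lambda>y. y \<noteq> a) (x # xs)"
    have ysd: "ys = filter (\<lambda>y. y \<noteq> a) L @ m # filter (\<lambda>y. y \<noteq> a) R"
      unfolding ys_def using False by (subst split) simp
    have ne: "ys \<noteq> []" using ysd by simp
    have Mys: "Max (set ys) = m"
    proof (rule Max_eqI)
      show "finite (set ys)" by simp
      show "m \<in> set ys" using ysd by simp
      fix y assume "y \<in> set ys" then show "y \<le> m" using mmax filter_is_subset[of _ "x#xs"] unfolding ys_def by blast
    qed
    have cond: "\<forall>z. \<not> (z \<noteq> a) \<longrightarrow> z \<noteq> m" using False by auto
    have tw: "takeWhile (\<lambda>y. y \<noteq> m) ys = filter (\<lambda>y. y \<noteq> a) L"
      unfolding ys_def L_def by (rule takeWhile_filter_comm[OF cond])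
    have dw2: "tl (dropWhile (\<lambda>y. y \<noteq> m) ys) = filter (\<lambda>y. y \<noteq> a) R"
      unfolding ys_def dropWhile_filter_comm[OF cond] dw using False by simp
    have "stack_sort ys = stack_sort (filter (\<lambda>y. y \<noteq> a) L) @ stack_sort (filter (\<lambda>y. y \<noteq> a) R) @ [m]"
      using stack_sort_ne[OF ne] by (simp only: Mys tw dw2 Let_def)
    then show ?thesis using ss IHL IHR False unfolding ys_def by simp
  qed
qed

lemma tw_Suc: "takeWhile (\<lambda>y. y \<noteq> Suc m) (map Suc zs) = map Suc (takeWhile (\<lambda>y. y \<noteq> m) zs)"
  by (induction zs) auto

lemma dw_Suc: "dropWhile (\<lambda>y. y \<noteq> Suc m) (map Suc zs) = map Suc (dropWhile (\<lambda>y. y \<noteq> m) zs)"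
  by (induction zs) auto

lemma stack_sort_map_Suc: "stack_sort (map Suc xs) = map Suc (stack_sort xs)"
proof (induction xs rule: stack_sort.induct)
  case 1
  then show ?case by simp
next
  case (2 x xs)
  define m where "m = Max (set (x # xs))"
  define L where "L = takeWhile (\<lambda>y. y \<noteq> m) (x # xs)"
  define R where "R = tl (dropWhile (\<lambda>y. y \<noteq> m) (x # xs))"
  have ss: "stack_sort (x # xs) = stack_sort L @ stack_sort R @ [m]"
    by (simp only: stack_sort.simps(2) m_def L_def R_def Let_def)
  have nem: "map Suc (x # xs) \<noteq> []" by simp
  have M: "Max (set (map Suc (x # xs))) = Suc m"
    unfolding m_def set_map by (rule mono_Max_commute[symmetric]) (auto simp: mono_def)
  have tw: "takeWhile (\<lambda>y. y \<noteq> Suc m) (map Suc (x # xs)) = map Suc L"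
    unfolding L_def by (rule tw_Suc)
  have dw: "tl (dropWhile (\<lambda>y. y \<noteq> Suc m) (map Suc (x # xs))) = map Suc R"
    unfolding R_def dw_Suc by (simp add: map_tl)
  have "stack_sort (map Suc (x # xs)) = stack_sort (map Suc L) @ stack_sort (map Suc R) @ [Suc m]"
    using stack_sort_ne[OF nem] by (simp only: M tw dw Let_def)
  then show ?case using ss "2.IH"(1)[OF m_def L_def R_def] "2.IH"(2)[OF m_def L_def R_def] by simp
qed


lemma tss_filter1:
  assumes "\<forall>y\<in>set xs. (1::nat) \<le> y" and "three_stack_sortable xs"
  shows "three_stack_sortable (filter (\<lambda>y. y \<noteq> 1) xs)"
proof -
  have a1: "\<forall>y\<in>set (stack_sort xs). 1 \<le> y" using assms(1) by (simp add: set_stack_sort)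
  have a2: "\<forall>y\<in>set (stack_sort (stack_sort xs)). 1 \<le> y" using a1 by (simp add: set_stack_sort)
  have eq: "stack_sort (stack_sort (stack_sort (filter (\<lambda>y. y \<noteq> 1) xs)))
      = filter (\<lambda>y. y \<noteq> 1) (stack_sort (stack_sort (stack_sort xs)))"
    using stack_sort_filter_min[OF assms(1)] stack_sort_filter_min[OF a1]
      stack_sort_filter_min[OF a2] by simp
  show ?thesis using assms(2) unfolding three_stack_sortable_def eq by (rule sorted_wrt_filter)
qed

lemma tss_map_Suc: "three_stack_sortable (map Suc xs) = three_stack_sortable xs"
  unfolding three_stack_sortable_def stack_sort_map_Suc
  by (simp add: sorted_wrt_map)

lemma w_step: "w (Suc n) \<le> Suc n * w n"
proof -
  define S where "S = (\<lambda>n. {\<pi> \<in> permutations_of_set {1..n}. three_stack_sortable \<pi>})"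
  define T where "T = {\<sigma> \<in> permutations_of_set {2..Suc n}. three_stack_sortable \<sigma>}"
  define f where "f = (\<lambda>(i::nat, \<sigma>::nat list). take i \<sigma> @ 1 # drop i \<sigma>)"
  have wS: "w m = card (S m)" for m unfolding w_def S_def by simp
  have finT: "finite T" unfolding T_def by simp
  have finS: "finite (S m)" for m unfolding S_def by simp
  have 1: "S (Suc n) \<subseteq> f ` ({0..<Suc n} \<times> T)"
  proof
    fix \<pi> assume "\<pi> \<in> S (Suc n)"
    then have p: "set \<pi> = {1..Suc n}" "distinct \<pi>" "three_stack_sortable \<pi>"
      unfolding S_def permutations_of_set_def by auto
    then have "1 \<in> set \<pi>" by auto
    then obtain ys zs where yz: "\<pi> = ys @ 1 # zs" by (metis split_list)
    then have n1: "1 \<notin> set ys" "1 \<notin> set zs" using p(2) by auto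
    have "filter (\<lambda>y. y \<noteq> 1) ys = ys" "filter (\<lambda>y. y \<noteq> 1) zs = zs"
      using n1 by (auto simp: filter_id_conv)
    then have fl: "filter (\<lambda>y. y \<noteq> 1) \<pi> = ys @ zs" using yz by simp
    have len: "length \<pi> = Suc n" using p(1,2) distinct_card by fastforce
    have "ys @ zs \<in> T"
    proof -
      have "set (ys @ zs) = set \<pi> - {1}" unfolding fl[symmetric] by auto
      also have "\<dots> = {2..Suc n}" unfolding p(1) by auto
      finally have "set (ys @ zs) = {2..Suc n}" .
      moreover have "distinct (ys @ zs)" using p(2) yz by auto
      moreover have "three_stack_sortable (ys @ zs)"
        using tss_filter1[of \<pi>] p fl by auto
      ultimately show ?thesis unfolding T_def permutations_of_set_def by auto
    qed
    moreover have "length ys < Suc n" using len yz by simp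
    moreover have "f (length ys, ys @ zs) = \<pi>" unfolding f_def using yz by simp
    ultimately show "\<pi> \<in> f ` ({0..<Suc n} \<times> T)"
      by (intro image_eqI[of _ _ "(length ys, ys @ zs)"]) auto
  qed
  have 2: "T \<subseteq> map Suc ` S n"
  proof
    fix \<sigma> assume "\<sigma> \<in> T"
    then have s: "set \<sigma> = {2..Suc n}" "distinct \<sigma>" "three_stack_sortable \<sigma>"
      unfolding T_def permutations_of_set_def by auto
    define \<tau> where "\<tau> = map (\<lambda>x. x - 1) \<sigma>"
    have st: "map Suc \<tau> = \<sigma>" unfolding \<tau>_def map_map using s(1)
      by (intro map_idI) auto
    have "set \<tau> = {1..n}"
    proof -
      have "set \<sigma> = Suc ` set \<tau>" by (simp add: st[symmetric])
      moreover have "Suc ` {1..n} = {2..Suc n}" by (simp add: image_Suc_atLeastAtMost numeral_2_eq_2)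
      ultimately have "Suc ` set \<tau> = Suc ` {1..n}" using s(1) by simp
      then show ?thesis using inj_image_eq_iff[OF inj_Suc] by blast
    qed
    moreover have "distinct \<tau>"
    proof -
      have "distinct (map Suc \<tau>)" using s(2) st by simp
      then show ?thesis by (simp add: distinct_map)
    qed
    moreover have "three_stack_sortable \<tau>"
    proof -
      have "three_stack_sortable (map Suc \<tau>)" using s(3) st by simp
      then show ?thesis by (simp add: tss_map_Suc)
    qed
    ultimately have "\<tau> \<in> S n" unfolding S_def permutations_of_set_def by auto
    then show "\<sigma> \<in> map Suc ` S n" using st by auto
  qed
  have "card (S (Suc n)) \<le> card (f ` ({0..<Suc n} \<times> T))"
    using 1 finT by (intro card_mono) auto
  also have "\<dots> \<le> card ({0..<Suc n} \<times> T)" using finT by (intro card_image_le) auto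
  also have "\<dots> = Suc n * card T" by (simp add: card_cartesian_product)
  also have "\<dots> \<le> Suc n * card (map Suc ` S n)"
    using 2 finS by (intro mult_le_mono2 card_mono) auto
  also have "\<dots> \<le> Suc n * card (S n)" by (intro mult_le_mono2 card_image_le finS)
  finally show ?thesis using wS by simp
qed

lemma w0: "w 0 = 1"
proof -
  have "{\<pi> \<in> permutations_of_set {1..0::nat}. three_stack_sortable \<pi>} = {[]}"
    unfolding three_stack_sortable_def by auto
  then show ?thesis unfolding w_def by simp
qed

lemma prod_primes_ge2:
  assumes "ps \<noteq> []" "\<forall>p \<in> set ps. prime (p::nat)"
  shows "prod_list ps \<ge> 2"
  using assms
proof (induction ps)
  case Nil then show ?case by simp
next
  case (Cons p ps)
  have "prod_list ps \<ge> 1"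
    using Cons.prems(2) by (induction ps) (auto simp: prime_gt_0_nat Suc_le_eq)
  moreover have "p \<ge> 2" using Cons.prems(2) prime_ge_2_nat by auto
  ultimately show ?case using mult_le_mono[of 2 p 1 "prod_list ps"] by simp
qed

theorem proposition3p1:
  fixes N k :: nat and ps :: "nat list" and P :: nat
  assumes "N \<ge> 1"
    and "k \<ge> 1" and "length ps = k" and "\<forall>p \<in> set ps. prime p"
    and "P = prod_list ps"
    and "\<forall>n \<in> {1..N}. N * (w n mod P) < P"
  shows "\<forall>n \<in> {1..N}. w n mod P = w n"
proof -
  have "ps \<noteq> []" using assms(2,3) by auto
  then have P2: "P \<ge> 2" using prod_primes_ge2[of ps] assms(4,5) by auto
  have "n \<le> N \<Longrightarrow> w n < P" for n
  proof (induction n)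
    case 0 then show ?case using w0 P2 by simp
  next
    case (Suc n)
    then have "w n mod P = w n" by simp
    have "w (Suc n) \<le> Suc n * w n" by (rule w_step)
    also have "\<dots> \<le> N * w n" using Suc.prems by (intro mult_le_mono1)
    also have "\<dots> = N * (w n mod P)" using \<open>w n mod P = w n\<close> by simp
    finally have le: "w (Suc n) \<le> N * (w n mod P)" .
    show ?case
    proof (cases n)
      case 0 then show ?thesis using w_step[of 0] w0 P2 by simp
    next
      case (Suc m)
      then have "N * (w n mod P) < P" using assms(6) Suc.prems \<open>Suc n \<le> N\<close> by auto
      then show ?thesis using le by linarith
    qed
  qed
  then show ?thesis by auto
qed

end
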